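(* Let $(a_n)_{n\ge1}$ be a sequence of positive integers with $a_1=1$ such that $\alpha_n:=\#\{i:a_i=n\}<\infty$ for all $n$. Let $(X_n)_{n\ge1}$ be independent random variables with $\mathbb{P}(X_n=a_n)=\tfrac12=\mathbb{P}(X_n=0)$. Then, with $L$ ranging over positive integers: (1) if $\limsup_{n\to\infty}\alpha_n^{1/n}=\infty$, then $\liminf_{L\to\infty}\lim_{n\to\infty}\mathbb{P}(X_1=1\mid X_1+\dots+X_n\le L)=0$; (2) if $\limsup_{n\to\infty}\alpha_n^{1/n}<\infty$, then $\limsup_{L\to\infty}\lim_{n\to\infty}\mathbb{P}(X_1=1\mid X_1+\dots+X_n\le L)>0$. *)

theory Defs
  imports "HOL-Probability.Probability"
begin

definition alpha :: "(nat \<Rightarrow> nat) \<Rightarrow> nat \<Rightarrow> nat" where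
  "alpha a n = card {i. 1 \<le> i \<and> a i = n}"

end

theory Submission
  imports Defs
begin


definition BB :: "(nat \<Rightarrow> nat) \<Rightarrow> nat \<Rightarrow> nat set" where
  "BB a L = {i. 1 \<le> i \<and> a i \<le> L}"
definition SS :: "(nat \<Rightarrow> nat) \<Rightarrow> nat \<Rightarrow> nat set set" where
  "SS a L = {T. T \<subseteq> BB a L \<and> sum a T \<le> L}"
definition GG :: "(nat \<Rightarrow> nat) \<Rightarrow> nat \<Rightarrow> nat" where
  "GG a L = card {T\<in>SS a L. 1 \<notin> T}"
definition HH :: "(nat \<Rightarrow> nat) \<Rightarrow> nat \<Rightarrow> nat" where
  "HH a L = card {T\<in>SS a L. 1 \<in> T}"
definition rr :: "(nat \<Rightarrow> nat) \<Rightarrow> nat \<Rightarrow> real" where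
  "rr a L = real (HH a L) / real (card (SS a L))"

locale comb =
  fixes a :: "nat \<Rightarrow> nat"
  assumes a1: "a 1 = 1"
    and apos: "\<And>n. 1 \<le> n \<Longrightarrow> 0 < a n"
    and afin: "\<And>n. finite {i. 1 \<le> i \<and> a i = n}"
begin

lemma finite_BB: "finite (BB a L)"
proof -
  have "BB a L = (\<Union>n\<in>{..L}. {i. 1 \<le> i \<and> a i = n})" unfolding BB_def by auto
  then show ?thesis using afin by auto
qed

lemma finite_SS: "finite (SS a L)"
  by (rule finite_subset[of _ "Pow (BB a L)"]) (auto simp: SS_def finite_BB)

lemma card_SS: "card (SS a L) = GG a L + HH a L"
proof -
  have "SS a L = {T\<in>SS a L. 1 \<notin> T} \<union> {T\<in>SS a L. 1 \<in> T}" by auto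
  then have "card (SS a L) = card ({T\<in>SS a L. 1 \<notin> T} \<union> {T\<in>SS a L. 1 \<in> T})" by simp
  also have "\<dots> = GG a L + HH a L" unfolding GG_def HH_def
    by (rule card_Un_disjoint) (auto intro: finite_subset[OF _ finite_SS])
  finally show ?thesis .
qed

lemma GG_pos: "1 \<le> GG a L"
proof -
  have "{} \<in> {T\<in>SS a L. 1 \<notin> T}" by (auto simp: SS_def)
  moreover have "finite {T\<in>SS a L. 1 \<notin> T}" by (auto intro: finite_subset[OF _ finite_SS])
  ultimately show ?thesis unfolding GG_def
    by (metis One_nat_def Suc_leI card_gt_0_iff empty_iff)
qed

lemma HH_eq: assumes "1 \<le> L" shows "HH a L = GG a (L - 1)"
proof -
  have fin: "finite T" if "T \<in> SS a L'" for T L' using that finite_BB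
    by (auto simp: SS_def intro: finite_subset)
  have "bij_betw (\<lambda>T. T - {1}) {T\<in>SS a L. 1 \<in> T} {T\<in>SS a (L - 1). 1 \<notin> T}"
  proof (rule bij_betw_byWitness[where f' = "insert 1"])
    show "\<forall>T\<in>{T \<in> SS a L. 1 \<in> T}. insert 1 (T - {1}) = T" by auto
    show "\<forall>T\<in>{T \<in> SS a (L - 1). 1 \<notin> T}. insert 1 T - {1} = T" by auto
    show "(\<lambda>T. T - {1}) ` {T \<in> SS a L. 1 \<in> T} \<subseteq> {T \<in> SS a (L - 1). 1 \<notin> T}"
    proof safe
      fix T assume T: "T \<in> SS a L" "1 \<in> T"
      have fT: "finite T" using fin T by auto
      have s: "sum a T = 1 + sum a (T - {1})" using sum.remove[OF fT T(2), of a] a1 by simp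
      have le: "a i \<le> sum a (T - {1})" if "i \<in> T - {1}" for i
        using member_le_sum[of i "T - {1}" a] that fT by auto
      have s2: "sum a (T - {1}) \<le> L - 1" using s T(1) unfolding SS_def by auto
      have "T - {1} \<subseteq> BB a (L - 1)"
      proof
        fix i assume i: "i \<in> T - {1}"
        then have "a i \<le> L - 1" using le[OF i] s2 by linarith
        moreover have "1 \<le> i" using T(1) i by (auto simp: SS_def BB_def)
        ultimately show "i \<in> BB a (L - 1)" by (simp add: BB_def)
      qed
      then show "T - {1} \<in> SS a (L - 1)" using s2 unfolding SS_def by auto
    qed
    show "insert 1 ` {T \<in> SS a (L - 1). 1 \<notin> T} \<subseteq> {T \<in> SS a L. 1 \<in> T}"
    proof safe
      fix T assume T: "T \<in> SS a (L - 1)" "1 \<notin> T"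
      have fT: "finite T" using fin T by auto
      show "insert 1 T \<in> SS a L" using T assms a1 fT unfolding SS_def BB_def by auto
    qed
  qed
  then show ?thesis unfolding HH_def GG_def by (rule bij_betw_same_card)
qed

lemma alpha_le: assumes "2 \<le> L" shows "alpha a L \<le> GG a L"
proof -
  have "inj_on (\<lambda>i. {i}) {i. 1 \<le> i \<and> a i = L}" by auto
  moreover have "(\<lambda>i. {i}) ` {i. 1 \<le> i \<and> a i = L} \<subseteq> {T\<in>SS a L. 1 \<notin> T}"
    using assms a1 by (auto simp: SS_def BB_def)
  moreover have "finite {T\<in>SS a L. 1 \<notin> T}" by (auto intro: finite_subset[OF _ finite_SS])
  ultimately show ?thesis unfolding alpha_def GG_def by (rule card_inj_on_le)
qed

lemma rr_eq: assumes "1 \<le> L"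
  shows "rr a L = real (GG a (L - 1)) / (real (GG a L) + real (GG a (L - 1)))"
  unfolding rr_def card_SS HH_eq[OF assms] by simp

lemma rr_nonneg: "0 \<le> rr a L" unfolding rr_def by simp

lemma card_SS_bound:
  fixes C :: real
  assumes C: "1 \<le> C" and al: "\<And>n. real (alpha a n) \<le> C ^ n"
  shows "real (card (SS a L)) \<le> exp 2 * (2 * C) ^ L"
proof -
  define x where "x = 1 / (2 * C)"
  have x0: "0 < x" and x1: "x \<le> 1" using C by (auto simp: x_def)
  have fB: "finite (BB a L)" by (rule finite_BB)
  have "real (card (SS a L)) * x ^ L = (\<Sum>T\<in>SS a L. x ^ L)" by simp
  also have "\<dots> \<le> (\<Sum>T\<in>SS a L. x ^ sum a T)"
    by (rule sum_mono) (auto simp: SS_def less_imp_le[OF x0] intro!: power_decreasing x1)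
  also have "\<dots> \<le> (\<Sum>T\<in>Pow (BB a L). x ^ sum a T)"
    by (rule sum_mono2) (auto simp: SS_def fB x0 less_imp_le)
  also have "\<dots> = (\<Sum>T\<in>Pow (BB a L). (\<Prod>i\<in>T. x ^ a i) * (\<Prod>i\<in>BB a L - T. 1))"
    by (simp add: power_sum)
  also have "\<dots> = (\<Prod>i\<in>BB a L. x ^ a i + 1)"
    by (rule prod_add[symmetric]) (rule fB)
  also have "\<dots> \<le> (\<Prod>i\<in>BB a L. exp (x ^ a i))"
    by (rule prod_mono) (auto simp: x0 less_imp_le exp_ge_add_one_self[unfolded add.commute[of 1]])
  also have "\<dots> = exp (\<Sum>i\<in>BB a L. x ^ a i)" by (simp add: exp_sum fB)
  also have "(\<Sum>i\<in>BB a L. x ^ a i) \<le> 2"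
  proof -
    have "(\<Sum>i\<in>BB a L. x ^ a i) = (\<Sum>y\<in>{..L}. \<Sum>i\<in>{i. i \<in> BB a L \<and> a i = y}. x ^ a i)"
      by (rule sum.group[symmetric]) (use fB in \<open>auto simp: BB_def\<close>)
    also have "\<dots> = (\<Sum>y\<in>{..L}. real (alpha a y) * x ^ y)"
    proof (rule sum.cong[OF refl])
      fix y assume "y \<in> {..L}"
      then have "{i. i \<in> BB a L \<and> a i = y} = {i. 1 \<le> i \<and> a i = y}" by (auto simp: BB_def)
      then show "(\<Sum>i\<in>{i. i \<in> BB a L \<and> a i = y}. x ^ a i) = real (alpha a y) * x ^ y"
        by (simp add: alpha_def)
    qed
    also have "\<dots> \<le> (\<Sum>y\<in>{..L}. C ^ y * x ^ y)"
      by (rule sum_mono) (auto intro!: mult_right_mono al simp: x0 less_imp_le)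
    also have "\<dots> = (\<Sum>y\<in>{..L}. (1/2) ^ y)"
      using C by (simp add: x_def power_mult_distrib[symmetric])
    also have "\<dots> \<le> 2"
    proof -
      have "(\<Sum>y\<in>{..<Suc L}. (1/2::real) ^ y) = 2 - 2 * (1/2) ^ Suc L"
        by (induction L) auto
      then show ?thesis by (simp add: lessThan_Suc_atMost)
    qed
    finally show ?thesis .
  qed
  then have "exp (\<Sum>i\<in>BB a L. x ^ a i) \<le> exp 2" by simp
  finally have "real (card (SS a L)) * x ^ L \<le> exp 2" .
  then have "real (card (SS a L)) \<le> exp 2 / x ^ L" using x0 by (simp add: field_simps)
  also have "exp 2 / x ^ L = exp 2 * (2 * C) ^ L" using C by (simp add: x_def power_divide)
  finally show ?thesis .
qed

end


lemma SS_eq: assumes "BB a L \<subseteq> {1..n}" and apos: "\<And>n. 1 \<le> n \<Longrightarrow> 0 < a n"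
  shows "{T. T \<subseteq> {1..n} \<and> sum a T \<le> L} = SS a L"
proof
  show "SS a L \<subseteq> {T. T \<subseteq> {1..n} \<and> sum a T \<le> L}" using assms(1) by (auto simp: SS_def)
  show "{T. T \<subseteq> {1..n} \<and> sum a T \<le> L} \<subseteq> SS a L"
  proof safe
    fix T assume T: "T \<subseteq> {1..n}" "sum a T \<le> L"
    have fT: "finite T" using T(1) finite_subset by blast
    have "T \<subseteq> BB a L"
    proof
      fix i assume i: "i \<in> T"
      have "a i \<le> sum a T" using member_le_sum[of i T a] fT i by auto
      then show "i \<in> BB a L" using T i by (auto simp: BB_def)
    qed
    then show "T \<in> SS a L" using T by (auto simp: SS_def)
  qed
qed

locale setting = prob_space M + comb a for M :: "'w measure" and a +
  fixes X :: "nat \<Rightarrow> 'w \<Rightarrow> nat"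
  assumes Xm: "\<And>n. 1 \<le> n \<Longrightarrow> X n \<in> measurable M (count_space UNIV)"
    and ind: "indep_vars (\<lambda>_. count_space UNIV) X {1..}"
    and pa: "\<And>n. 1 \<le> n \<Longrightarrow> prob {\<omega>\<in>space M. X n \<omega> = a n} = 1/2"
    and p0: "\<And>n. 1 \<le> n \<Longrightarrow> prob {\<omega>\<in>space M. X n \<omega> = 0} = 1/2"
begin

lemma Xm': "i \<in> {1..n} \<Longrightarrow> X i \<in> measurable M (count_space UNIV)"
  using Xm by auto

lemma pattern:
  assumes n: "1 \<le> n"
  shows "prob {\<omega>\<in>space M. \<forall>i\<in>{1..n}. X i \<omega> = (if i \<in> T then a i else 0)} = (1/2) ^ n"
proof -
  define c where "c i = (if i \<in> T then a i else 0)" for i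
  have ie: "indep_events (\<lambda>i. {\<omega>\<in>space M. X i \<omega> = c i}) {1..}"
    by (rule indep_eventsI_indep_vars[OF ind]) auto
  then have "prob (\<Inter>i\<in>{1..n}. {\<omega>\<in>space M. X i \<omega> = c i}) = (\<Prod>i\<in>{1..n}. prob {\<omega>\<in>space M. X i \<omega> = c i})"
    unfolding indep_events_def using n by (auto)
  also have "\<dots> = (\<Prod>i\<in>{1..n}. 1/2)"
    by (rule prod.cong) (auto simp: c_def pa p0)
  also have "(\<Inter>i\<in>{1..n}. {\<omega>\<in>space M. X i \<omega> = c i}) = {\<omega>\<in>space M. \<forall>i\<in>{1..n}. X i \<omega> = c i}"
    using n by auto
  finally show ?thesis by (simp add: c_def)
qed

lemma AE0: "AE \<omega> in M. \<forall>i\<in>{1..n}. X i \<omega> = 0 \<or> X i \<omega> = a i"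
proof (rule eventually_ball_finite)
  show "finite {1..n}" by simp
  show "\<forall>i\<in>{1..n}. AE \<omega> in M. X i \<omega> = 0 \<or> X i \<omega> = a i"
  proof
    fix i assume i: "i \<in> {1..n}"
    have m: "X i \<in> measurable M (count_space UNIV)" using Xm' i .
    have "{\<omega>\<in>space M. X i \<omega> = 0 \<or> X i \<omega> = a i} = {\<omega>\<in>space M. X i \<omega> = 0} \<union> {\<omega>\<in>space M. X i \<omega> = a i}"
      by auto
    moreover have "prob ({\<omega>\<in>space M. X i \<omega> = 0} \<union> {\<omega>\<in>space M. X i \<omega> = a i}) = 1/2 + 1/2"
      using apos[of i] i m by (subst finite_measure_Union) (auto simp: pa p0)
    ultimately have "prob {\<omega>\<in>space M. X i \<omega> = 0 \<or> X i \<omega> = a i} = 1" by simp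
    from AE_prob_1[OF this] show "AE \<omega> in M. X i \<omega> = 0 \<or> X i \<omega> = a i" by auto
  qed
qed

definition DD :: "nat \<Rightarrow> nat set \<Rightarrow> 'w set" where
  "DD n T = {\<omega>\<in>space M. {i\<in>{1..n}. X i \<omega> \<noteq> 0} = T}"

lemma DD_alt: "T \<subseteq> {1..n} \<Longrightarrow> DD n T = {\<omega>\<in>space M. \<forall>i\<in>{1..n}. (X i \<omega> \<noteq> 0) = (i \<in> T)}"
  unfolding DD_def by auto

lemma DD_sets: "T \<subseteq> {1..n} \<Longrightarrow> DD n T \<in> sets M"
  unfolding DD_alt using Xm' by measurable

lemma DD_prob: assumes n: "1 \<le> n" and T: "T \<subseteq> {1..n}" shows "prob (DD n T) = (1/2) ^ n"
proof -
  have "prob (DD n T) = prob {\<omega>\<in>space M. \<forall>i\<in>{1..n}. X i \<omega> = (if i \<in> T then a i else 0)}"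
  proof (rule finite_measure_eq_AE)
    show "AE x in M. (x \<in> DD n T) = (x \<in> {\<omega> \<in> space M. \<forall>i\<in>{1..n}. X i \<omega> = (if i \<in> T then a i else 0)})"
      using AE0[of n]
    proof eventually_elim
      case (elim \<omega>)
      have "\<forall>i\<in>{1..n}. ((X i \<omega> \<noteq> 0) = (i \<in> T)) = (X i \<omega> = (if i \<in> T then a i else 0))"
      proof
        fix i assume i: "i \<in> {1..n}"
        have "0 < a i" using apos i by auto
        moreover have "X i \<omega> = 0 \<or> X i \<omega> = a i" using elim i by auto
        ultimately show "((X i \<omega> \<noteq> 0) = (i \<in> T)) = (X i \<omega> = (if i \<in> T then a i else 0))" by auto
      qed
      then show ?case unfolding DD_alt[OF T] by auto
    qed
    show "DD n T \<in> sets M" using DD_sets[OF T] .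
    show "{\<omega> \<in> space M. \<forall>i\<in>{1..n}. X i \<omega> = (if i \<in> T then a i else 0)} \<in> sets M"
      using Xm' by measurable
  qed
  then show ?thesis using pattern[OF n] by simp
qed

lemma gen_sets: "{\<omega>\<in>space M. P {i\<in>{1..n}. X i \<omega> \<noteq> 0}} \<in> sets M"
proof -
  define S where "S = {T. T \<subseteq> {1..n} \<and> P T}"
  have fS: "finite S" unfolding S_def by (rule finite_subset[of _ "Pow {1..n}"]) auto
  have "{\<omega>\<in>space M. P {i\<in>{1..n}. X i \<omega> \<noteq> 0}} = (\<Union>T\<in>S. DD n T)"
    unfolding S_def DD_def by auto
  also have "\<dots> \<in> sets M" using fS DD_sets by (auto simp: S_def)
  finally show ?thesis .
qed

lemma prob_general:
  assumes n: "1 \<le> n"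
  shows "prob {\<omega>\<in>space M. P {i\<in>{1..n}. X i \<omega> \<noteq> 0}} = real (card {T. T \<subseteq> {1..n} \<and> P T}) * (1/2) ^ n"
proof -
  define S where "S = {T. T \<subseteq> {1..n} \<and> P T}"
  have fS: "finite S" unfolding S_def by (rule finite_subset[of _ "Pow {1..n}"]) auto
  have "{\<omega>\<in>space M. P {i\<in>{1..n}. X i \<omega> \<noteq> 0}} = (\<Union>T\<in>S. DD n T)"
    unfolding S_def DD_def by auto
  then have "prob {\<omega>\<in>space M. P {i\<in>{1..n}. X i \<omega> \<noteq> 0}} = (\<Sum>T\<in>S. prob (DD n T))"
    using fS DD_sets by (auto intro!: finite_measure_finite_Union simp: S_def disjoint_family_on_def DD_def)
  also have "\<dots> = (\<Sum>T\<in>S. (1/2) ^ n)" by (rule sum.cong) (use DD_prob[OF n] in \<open>auto simp: S_def\<close>)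
  finally show ?thesis by (simp add: S_def)
qed

lemma sum_AE: assumes n: "1 \<le> n" shows "AE \<omega> in M. (\<Sum>i=1..n. X i \<omega>) = sum a {i\<in>{1..n}. X i \<omega> \<noteq> 0}
                  \<and> (X 1 \<omega> = 1 \<longleftrightarrow> 1 \<in> {i\<in>{1..n}. X i \<omega> \<noteq> 0})"
  using AE0[of n]
proof eventually_elim
  case (elim \<omega>)
  have "(\<Sum>i=1..n. X i \<omega>) = (\<Sum>i\<in>{1..n}. if X i \<omega> \<noteq> 0 then a i else 0)"
  proof (rule sum.cong)
    fix x assume "x \<in> {1..n}"
    then have "X x \<omega> = 0 \<or> X x \<omega> = a x" using elim by auto
    then show "X x \<omega> = (if X x \<omega> \<noteq> 0 then a x else 0)" by auto
  qed simp
  also have "\<dots> = sum a {i\<in>{1..n}. X i \<omega> \<noteq> 0}" by (rule sum.inter_filter[symmetric]) simp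
  moreover have "X 1 \<omega> = 0 \<or> X 1 \<omega> = a 1" using elim n by auto
  ultimately show ?case using a1 n by auto
qed

lemma cond_eq: assumes n: "1 \<le> n" and B: "BB a L \<subseteq> {1..n}"
  shows "\<P>(\<omega> in M. X 1 \<omega> = 1 \<bar> (\<Sum>i=1..n. X i \<omega>) \<le> L) = rr a L"
proof -
  have e1: "prob {\<omega>\<in>space M. X 1 \<omega> = 1 \<and> (\<Sum>i=1..n. X i \<omega>) \<le> L}
     = prob {\<omega>\<in>space M. (\<lambda>T. 1 \<in> T \<and> sum a T \<le> L) {i\<in>{1..n}. X i \<omega> \<noteq> 0}}"
  proof (rule finite_measure_eq_AE)
    show "AE x in M. (x \<in> {\<omega>\<in>space M. X 1 \<omega> = 1 \<and> (\<Sum>i=1..n. X i \<omega>) \<le> L}) =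
       (x \<in> {\<omega>\<in>space M. (\<lambda>T. 1 \<in> T \<and> sum a T \<le> L) {i\<in>{1..n}. X i \<omega> \<noteq> 0}})"
      using sum_AE[OF n] by eventually_elim auto
    show "{\<omega>\<in>space M. X 1 \<omega> = 1 \<and> (\<Sum>i=1..n. X i \<omega>) \<le> L} \<in> sets M"
      using Xm' Xm[of 1] by measurable
    show "{\<omega>\<in>space M. (\<lambda>T. 1 \<in> T \<and> sum a T \<le> L) {i\<in>{1..n}. X i \<omega> \<noteq> 0}} \<in> sets M"
      by (rule gen_sets)
  qed
  have e2: "prob {\<omega>\<in>space M. (\<Sum>i=1..n. X i \<omega>) \<le> L}
     = prob {\<omega>\<in>space M. (\<lambda>T. sum a T \<le> L) {i\<in>{1..n}. X i \<omega> \<noteq> 0}}"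
  proof (rule finite_measure_eq_AE)
    show "AE x in M. (x \<in> {\<omega>\<in>space M. (\<Sum>i=1..n. X i \<omega>) \<le> L}) =
       (x \<in> {\<omega>\<in>space M. (\<lambda>T. sum a T \<le> L) {i\<in>{1..n}. X i \<omega> \<noteq> 0}})"
      using sum_AE[OF n] by eventually_elim auto
    show "{\<omega>\<in>space M. (\<Sum>i=1..n. X i \<omega>) \<le> L} \<in> sets M"
      using Xm' by measurable
    show "{\<omega>\<in>space M. (\<lambda>T. sum a T \<le> L) {i\<in>{1..n}. X i \<omega> \<noteq> 0}} \<in> sets M"
      by (rule gen_sets)
  qed
  have c1: "{T. T \<subseteq> {1..n} \<and> (1 \<in> T \<and> sum a T \<le> L)} = {T\<in>SS a L. 1 \<in> T}"
    using SS_eq[OF B apos] by blast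
  have c2: "{T. T \<subseteq> {1..n} \<and> sum a T \<le> L} = SS a L"
    using SS_eq[OF B apos] by blast
  have p1: "prob {\<omega>\<in>space M. X 1 \<omega> = 1 \<and> (\<Sum>i=1..n. X i \<omega>) \<le> L} = real (HH a L) * (1/2) ^ n"
    unfolding e1 using prob_general[OF n, of "\<lambda>T. 1 \<in> T \<and> sum a T \<le> L"] c1 by (simp add: HH_def)
  have p2: "prob {\<omega>\<in>space M. (\<Sum>i=1..n. X i \<omega>) \<le> L} = real (card (SS a L)) * (1/2) ^ n"
    unfolding e2 using prob_general[OF n, of "\<lambda>T. sum a T \<le> L"] c2 by simp
  show ?thesis
    unfolding cond_prob_def p1 p2 by (simp add: rr_def)
qed

lemma lim_eq: "lim (\<lambda>n. \<P>(\<omega> in M. X 1 \<omega> = 1 \<bar> (\<Sum>i=1..n. X i \<omega>) \<le> L)) = rr a L"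
proof -
  obtain k where k: "BB a L \<subseteq> {..<k}" using finite_nat_bounded[OF finite_BB] by blast
  have "eventually (\<lambda>n. \<P>(\<omega> in M. X 1 \<omega> = 1 \<bar> (\<Sum>i=1..n. X i \<omega>) \<le> L) = rr a L) sequentially"
    unfolding eventually_sequentially
  proof (intro exI[of _ "max k 1"] allI impI)
    fix n assume n: "max k 1 \<le> n"
    have "BB a L \<subseteq> {1..n}" using k n by (force simp: BB_def)
    then show "\<P>(\<omega> in M. X 1 \<omega> = 1 \<bar> (\<Sum>i=1..n. X i \<omega>) \<le> L) = rr a L"
      by (rule cond_eq[rotated]) (use n in simp)
  qed
  then have "(\<lambda>n. \<P>(\<omega> in M. X 1 \<omega> = 1 \<bar> (\<Sum>i=1..n. X i \<omega>) \<le> L)) \<longlonglongrightarrow> rr a L"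
    by (rule tendsto_eventually)
  then show ?thesis by (rule limI)
qed

end


context comb begin

lemma rr_le1: "rr a L \<le> 1"
  unfolding rr_def card_SS using GG_pos[of L] by (simp add: divide_le_eq_1)

lemma part1:
  assumes inf: "limsup (\<lambda>n. ereal (root n (real (alpha a n)))) = \<infinity>"
  shows "liminf (\<lambda>L. ereal (rr a L)) = 0"
proof (rule antisym)
  show "0 \<le> liminf (\<lambda>L. ereal (rr a L))"
    by (rule Liminf_bounded) (simp add: rr_nonneg)
  show "liminf (\<lambda>L. ereal (rr a L)) \<le> 0"
  proof (rule ccontr)
    assume "\<not> liminf (\<lambda>L. ereal (rr a L)) \<le> 0"
    then have "0 < liminf (\<lambda>L. ereal (rr a L))" by simp
    then obtain \<epsilon> where e0: "0 < ereal \<epsilon>" and el: "ereal \<epsilon> < liminf (\<lambda>L. ereal (rr a L))"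
      using ereal_dense2 by blast
    from less_LiminfD[OF el] obtain M where M: "\<And>L. L \<ge> M \<Longrightarrow> \<epsilon> < rr a L"
      by (auto simp: eventually_sequentially)
    have e0': "0 < \<epsilon>" using e0 by simp
    define N where "N = max M 2"
    define K where "K = 1 / \<epsilon>"
    have e1: "\<epsilon> < 1" using M[of M] rr_le1[of M] by simp
    have K1: "1 \<le> K" using e0' e1 by (simp add: K_def)
    have step: "real (GG a L) \<le> K * real (GG a (L - 1))" if "L \<ge> N" for L
    proof -
      have L1: "1 \<le> L" using that by (simp add: N_def)
      have "\<epsilon> < real (GG a (L - 1)) / (real (GG a L) + real (GG a (L - 1)))"
        using M[of L] that rr_eq[OF L1] by (simp add: N_def)
      moreover have "0 < real (GG a L) + real (GG a (L - 1))" using GG_pos[of L] by simp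
      ultimately have "\<epsilon> * (real (GG a L) + real (GG a (L - 1))) < real (GG a (L - 1))"
        by (simp add: field_simps)
      then have "\<epsilon> * real (GG a L) + \<epsilon> * real (GG a (L - 1)) < real (GG a (L - 1))"
        by (simp add: distrib_left)
      moreover have "0 \<le> \<epsilon> * real (GG a (L - 1))" using e0' by simp
      ultimately have "\<epsilon> * real (GG a L) \<le> real (GG a (L - 1))" by linarith
      then show ?thesis using e0' by (simp add: K_def field_simps)
    qed
    define P where "P = real (GG a (N - 1))"
    have P1: "1 \<le> P" using GG_pos[of "N - 1"] by (simp add: P_def)
    have grow: "real (GG a (N - 1 + d)) \<le> K ^ d * P" for d
    proof (induction d)
      case 0 then show ?case by (simp add: P_def)
    next
      case (Suc d)
      have "real (GG a (N - 1 + Suc d)) \<le> K * real (GG a (N - 1 + Suc d - 1))"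
        by (rule step) (unfold N_def, arith)
      also have "N - 1 + Suc d - 1 = N - 1 + d" using N_def by simp
      also have "K * real (GG a (N - 1 + d)) \<le> K * (K ^ d * P)"
        using Suc K1 by (intro mult_left_mono) auto
      finally show ?case by simp
    qed
    have bound: "root L (real (alpha a L)) \<le> K * P" if "L \<ge> N" for L
    proof -
      have L0: "0 < L" and L2: "2 \<le> L" using that by (auto simp: N_def)
      have "real (alpha a L) \<le> real (GG a L)" using alpha_le[OF L2] by simp
      also have "real (GG a L) \<le> K ^ (L - (N - 1)) * P"
        using grow[of "L - (N - 1)"] that by (simp add: N_def)
      also have "\<dots> \<le> K ^ L * P"
        using K1 P1 by (intro mult_right_mono power_increasing) auto
      finally have "root L (real (alpha a L)) \<le> root L (K ^ L * P)"
        using L0 by (rule real_root_le_mono[rotated])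
      also have "\<dots> = K * root L P"
        using K1 L0 by (simp add: real_root_mult real_root_pow_pos2 real_root_power_cancel)
      also have "root L P \<le> P"
      proof -
        have "P \<le> P ^ L" using P1 L0 by (simp add: self_le_power)
        then have "root L P \<le> root L (P ^ L)" using L0 by (rule real_root_le_mono[rotated])
        also have "\<dots> = P" using L0 P1 by (simp add: real_root_power_cancel)
        finally show ?thesis .
      qed
      then have "K * root L P \<le> K * P" using K1 by simp
      finally show ?thesis .
    qed
    have "limsup (\<lambda>n. ereal (root n (real (alpha a n)))) \<le> ereal (K * P)"
      by (rule Limsup_bounded) (use bound in \<open>auto simp: eventually_sequentially\<close>)
    then show False using inf by simp
  qed
qed

lemma part2:
  assumes fin: "limsup (\<lambda>n. ereal (root n (real (alpha a n)))) < \<infinity>"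
  shows "0 < limsup (\<lambda>L. ereal (rr a L))"
proof (rule ccontr)
  assume neg: "\<not> 0 < limsup (\<lambda>L. ereal (rr a L))"
  obtain B where B: "\<And>n. root n (real (alpha a n)) \<le> B"
    using limsup_finite_then_bounded[OF fin] by blast
  define C where "C = max B 1"
  have C1: "1 \<le> C" by (simp add: C_def)
  have al: "real (alpha a n) \<le> C ^ n" for n
  proof (cases "n = 0")
    case True
    have e: "{i. 1 \<le> i \<and> a i = 0} = {}" using apos by fastforce
    have "alpha a n = 0" unfolding alpha_def True e by simp
    then show ?thesis using C1 by simp
  next
    case False
    then have "real (alpha a n) = root n (real (alpha a n)) ^ n" by (simp add: real_root_pow_pos2)
    also have "\<dots> \<le> C ^ n"
      by (rule power_mono) (use B[of n] False in \<open>auto simp: C_def\<close>)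
    finally show ?thesis .
  qed
  define \<epsilon> where "\<epsilon> = 1 / (4 * C + 1)"
  have e0: "0 < \<epsilon>" using C1 by (simp add: \<epsilon>_def)
  have "limsup (\<lambda>L. ereal (rr a L)) < ereal \<epsilon>" 
  proof (rule le_less_trans)
    show "limsup (\<lambda>L. ereal (rr a L)) \<le> 0" using neg by simp
    show "0 < ereal \<epsilon>" using e0 by simp
  qed
  from Limsup_lessD[OF this] obtain M0 where M0: "\<And>L. L \<ge> M0 \<Longrightarrow> rr a L < \<epsilon>"
    by (auto simp: eventually_sequentially)
  define M where "M = max M0 1"
  have step: "4 * C * real (GG a (L - 1)) \<le> real (GG a L)" if "L \<ge> M" for L
  proof -
    have L1: "1 \<le> L" using that by (simp add: M_def)
    have "real (GG a (L - 1)) / (real (GG a L) + real (GG a (L - 1))) < \<epsilon>"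
      using M0[of L] that rr_eq[OF L1] by (simp add: M_def)
    moreover have "0 < real (GG a L) + real (GG a (L - 1))" using GG_pos[of L] by simp
    ultimately have "real (GG a (L - 1)) < \<epsilon> * (real (GG a L) + real (GG a (L - 1)))"
      by (simp add: field_simps)
    then have "real (GG a (L - 1)) * (4 * C + 1) < (real (GG a L) + real (GG a (L - 1)))"
      using C1 unfolding \<epsilon>_def by (simp add: divide_simps)
    then have "real (GG a (L - 1)) * (4 * C) < real (GG a L)" by (simp add: distrib_left distrib_right)
    then show ?thesis by (metis less_imp_le mult.commute)
  qed
  have grow: "(4 * C) ^ d \<le> real (GG a (M + d))" for d
  proof (induction d)
    case 0 then show ?case using GG_pos[of M] by simp
  next
    case (Suc d)
    have "(4 * C) ^ Suc d = 4 * C * (4 * C) ^ d" by simp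
    also have "\<dots> \<le> 4 * C * real (GG a (M + d))" using Suc C1 by (intro mult_left_mono) auto
    also have "\<dots> \<le> real (GG a (M + Suc d))" using step[of "M + Suc d"] by simp
    finally show ?case .
  qed
  define Q where "Q = exp 2 * (2 * C) ^ M"
  have upper: "2 ^ d \<le> Q" for d :: nat
  proof -
    have A0: "(4 * C) ^ d \<le> real (card (SS a (M + d)))"
      using grow[of d] card_SS[of "M + d"] by simp
    have A: "(4 * C) ^ d \<le> Q * (2 * C) ^ d"
    proof -
      note A0
      also have "real (card (SS a (M + d))) \<le> exp 2 * (2 * C) ^ (M + d)" by (rule card_SS_bound[OF C1 al])
      also have "\<dots> = Q * (2 * C) ^ d" unfolding Q_def power_add by (simp only: mult.assoc)
      finally show ?thesis .
    qed
    have "(2::real) * (2 * C) = 4 * C" by simp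
    then have B: "(4 * C) ^ d = 2 ^ d * (2 * C) ^ d" by (metis power_mult_distrib)
    have "2 ^ d * (2 * C) ^ d \<le> Q * (2 * C) ^ d" using A unfolding B .
    moreover have "0 < (2 * C) ^ d" using C1 by simp
    ultimately show ?thesis by (rule mult_right_le_imp_le)
  qed
  obtain d :: nat where d: "Q < real d" using reals_Archimedean2 by blast
  have "d < 2 ^ d" by (rule less_exp)
  then have "real d < real (2 ^ d)" by (simp only: of_nat_less_iff)
  then have "real d < 2 ^ d" by simp
  then show False using upper[of d] d by linarith
qed

end

theorem theoremA3:
  fixes M :: "'w measure" and a :: "nat \<Rightarrow> nat" and X :: "nat \<Rightarrow> 'w \<Rightarrow> nat"
  assumes "prob_space M"
    and "a 1 = 1"
    and "\<And>n. 1 \<le> n \<Longrightarrow> 0 < a n"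
    and "\<And>n. finite {i. 1 \<le> i \<and> a i = n}"
    and "\<And>n. 1 \<le> n \<Longrightarrow> X n \<in> measurable M (count_space UNIV)"
    and "prob_space.indep_vars M (\<lambda>_. count_space UNIV) X {1..}"
    and "\<And>n. 1 \<le> n \<Longrightarrow> \<P>(\<omega> in M. X n \<omega> = a n) = 1/2"
    and "\<And>n. 1 \<le> n \<Longrightarrow> \<P>(\<omega> in M. X n \<omega> = 0) = 1/2"
  shows "(limsup (\<lambda>n. ereal (root n (real (alpha a n)))) = \<infinity> \<longrightarrow>
            liminf (\<lambda>L::nat. ereal (lim (\<lambda>n.
               \<P>(\<omega> in M. X 1 \<omega> = 1 \<bar> (\<Sum>i=1..n. X i \<omega>) \<le> L)))) = 0)
       \<and> (limsup (\<lambda>n. ereal (root n (real (alpha a n)))) < \<infinity> \<longrightarrow>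
            limsup (\<lambda>L::nat. ereal (lim (\<lambda>n.
               \<P>(\<omega> in M. X 1 \<omega> = 1 \<bar> (\<Sum>i=1..n. X i \<omega>) \<le> L)))) > 0)"
proof -
  have st: "setting M a X"
  proof (intro setting.intro comb.intro setting_axioms.intro)
    show "prob_space M" by (rule assms(1))
    show "a 1 = 1" by (rule assms(2))
    show "0 < a n" if "1 \<le> n" for n using assms(3) that .
    show "finite {i. 1 \<le> i \<and> a i = n}" for n by (rule assms(4))
    show "X n \<in> measurable M (count_space UNIV)" if "1 \<le> n" for n using assms(5) that .
    show "prob_space.indep_vars M (\<lambda>_. count_space UNIV) X {1..}" by (rule assms(6))
    show "measure M {\<omega>\<in>space M. X n \<omega> = a n} = 1/2" if "1 \<le> n" for n using assms(7) that .
    show "measure M {\<omega>\<in>space M. X n \<omega> = 0} = 1/2" if "1 \<le> n" for n using assms(8) that .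
  qed
  interpret setting M a X by (rule st)
  have lim: "(\<lambda>L::nat. ereal (lim (\<lambda>n. \<P>(\<omega> in M. X 1 \<omega> = 1 \<bar> (\<Sum>i=1..n. X i \<omega>) \<le> L))))
      = (\<lambda>L. ereal (rr a L))" by (rule ext) (rule arg_cong[where f=ereal], rule lim_eq)
  show ?thesis unfolding lim
  proof (intro conjI impI)
    assume h: "limsup (\<lambda>n. ereal (root n (real (alpha a n)))) = \<infinity>"
    show "liminf (\<lambda>L. ereal (rr a L)) = 0" by (rule part1[OF h])
  next
    assume h: "limsup (\<lambda>n. ereal (root n (real (alpha a n)))) < \<infinity>"
    show "limsup (\<lambda>L. ereal (rr a L)) > 0" by (rule part2[OF h])
  qed
qed

end
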